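(* Let $S\in\mathbb{R}^d$ be a random vector with density $f(\cdot\mid\beta^* )$ and let $\Omega\in\mathbb{R}^p$ be a random vector, independent of $S$, with density $g$ supported on $\mathbb{R}^p$. Let $D\in\mathbb{R}^{p\times d}$, $P\in\mathbb{R}^{p\times p}$ invertible and $q\in\mathbb{R}^p$ be fixed, and define the optimization variable $O\in\mathbb{R}^p$ through the inversion map $\Omega = DS+PO+q$, i.e. $O=P^{-1}(\Omega-DS-q)$. Then for every convex, compact set $\mathcal{R}\subset\mathbb{R}^d\times\mathbb{R}^p$, \[ \log\mathbb{P}\big((S,O)\in\mathcal{R}\mid\beta^*\big)\;\le\;-\inf_{(s,o)\in\mathcal{R}}\Big\{\Lambda_f^*(s\mid\beta^* )+\Lambda_g^*(Ds+Po+q)\Big\}. \]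
   Context: $\Lambda_f(t\mid\beta^* )=\log\mathbb{E}[\exp(t^TS)\mid\beta^*]$ is the log moment generating function (log-MGF) of $S$ and $\Lambda_f^*(s\mid\beta^* )=\sup_{t\in\mathbb{R}^d}\{t^Ts-\Lambda_f(t\mid\beta^* )\}$ its convex conjugate; similarly $\Lambda_g(t)=\log\mathbb{E}[\exp(t^T\Omega)]$ and $\Lambda_g^*(w)=\sup_{t\in\mathbb{R}^p}\{t^Tw-\Lambda_g(t)\}$. The probability is with respect to the joint law of $(S,O)$ induced by the independent laws of $S$ and $\Omega$. *)

theory Defs
  imports "HOL-Probability.Probability"
begin

definition log_mgf :: "'a::euclidean_space measure \<Rightarrow> 'a \<Rightarrow> real" where
  "log_mgf M t = ln (\<integral>x. exp (t \<bullet> x) \<partial>M)"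

text \<open>Convex conjugate of the log-MGF (extended-real valued). Points t where the MGF is
  infinite (log-MGF = +infinity) contribute -infinity to the supremum and are omitted.\<close>
definition log_mgf_conj :: "'a::euclidean_space measure \<Rightarrow> 'a \<Rightarrow> ereal" where
  "log_mgf_conj M s =
     (SUP t \<in> {t. integrable M (\<lambda>x. exp (t \<bullet> x))}. ereal (t \<bullet> s - log_mgf M t))"

end

theory Submission
  imports Defs
begin

lemma chernoff_convex:
  fixes MS :: "'a::euclidean_space measure" and MW :: "'b::euclidean_space measure"
    and K :: "('a \<times> 'b) set"
  assumes PS: "prob_space MS" and PW: "prob_space MW"
    and sS: "sets MS = sets borel" and sW: "sets MW = sets borel"
    and cK: "convex K" and kK: "compact K"
    and pos: "measure (MS \<Otimes>\<^sub>M MW) K > 0"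
  shows "\<exists>m\<in>K. log_mgf_conj MS (fst m) + log_mgf_conj MW (snd m)
              \<le> ereal (- ln (measure (MS \<Otimes>\<^sub>M MW) K))"
proof -
  interpret P: pair_prob_space MS MW
    using PS PW by (simp add: pair_prob_space_def pair_sigma_finite_def prob_space_imp_sigma_finite)
  define M where "M = MS \<Otimes>\<^sub>M MW"
  define p where "p = measure M K"
  have p0: "p > 0" using pos by (simp add: p_def M_def)
  have sM: "sets M = sets borel"
    unfolding M_def using sets_pair_measure_cong[OF sS sW] borel_prod by metis
  have spM: "space M = UNIV" using sets_eq_imp_space_eq[OF sM] by simp
  have KM: "K \<in> sets M" using sM kK compact_imp_closed borel_closed by blast
  have idM: "(\<lambda>z. z) \<in> borel_measurable M"
    by (rule measurable_ident_sets[OF sM])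
  have finM: "finite_measure M" unfolding M_def by (simp add: P.finite_measure_axioms)
  obtain B where B: "\<And>z. z \<in> K \<Longrightarrow> norm z \<le> B" and B0: "B \<ge> 0"
    using compact_imp_bounded[OF kK] unfolding bounded_iff by (meson norm_ge_zero order_trans linear)
  have indK: "indicator K \<in> borel_measurable M" using KM by simp
  have int1: "integrable M (\<lambda>z. indicator K z *\<^sub>R z)"
  proof (rule finite_measure.integrable_const_bound[OF finM, where B=B])
    show "AE x in M. norm (indicator K x *\<^sub>R x) \<le> B"
      using B B0 by (auto simp: indicator_def)
    show "(\<lambda>z. indicator K z *\<^sub>R z) \<in> borel_measurable M"
      using indK idM by (intro borel_measurable_scaleR) auto
  qed
  define m where "m = (1/p) *\<^sub>R integral\<^sup>L M (\<lambda>z. indicator K z *\<^sub>R z)"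
  have inner_m: "(\<integral>z. indicator K z * inner a z \<partial>M) = p * inner a m" for a
  proof -
    have "(\<integral>z. indicator K z * inner a z \<partial>M) = (\<integral>z. inner a (indicator K z *\<^sub>R z) \<partial>M)"
      by simp
    also have "\<dots> = inner a (integral\<^sup>L M (\<lambda>z. indicator K z *\<^sub>R z))"
      using int1 by (rule integral_inner_right)
    also have "\<dots> = p * inner a m" using p0 by (simp add: m_def)
    finally show ?thesis .
  qed
  have intinner: "integrable M (\<lambda>z. indicator K z * inner a z)" for a
    using integrable_inner_right[OF int1, of a] by simp
  have intind: "integrable M (indicator K :: _ \<Rightarrow> real)"
    by (rule finite_measure.integrable_const_bound[OF finM, where B=1])
       (use indK in \<open>auto simp: indicator_def\<close>)
  have intK: "(\<integral>z. indicator K z \<partial>M) = p" using KM by (simp add: p_def spM)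
  have mK: "m \<in> K"
  proof (rule ccontr)
    assume "m \<notin> K"
    then obtain a b where ab: "inner a m < b" "\<forall>x\<in>K. b < inner a x"
      using separating_hyperplane_closed_point[OF cK compact_imp_closed[OF kK]] by blast
    have "(\<integral>z. indicator K z * b \<partial>M) \<le> (\<integral>z. indicator K z * inner a z \<partial>M)"
      using ab(2) by (intro integral_mono intinner integrable_mult_left intind) (auto simp: indicator_def less_imp_le)
    then have "p * b \<le> p * inner a m" using intK inner_m by simp
    then have "b \<le> inner a m" using p0 by simp
    then show False using ab(1) by simp
  qed
  have key: "(inner t1 (fst m) - log_mgf MS t1) + (inner t2 (snd m) - log_mgf MW t2) \<le> - ln p"
    if i1: "integrable MS (\<lambda>x. exp (inner t1 x))" and i2: "integrable MW (\<lambda>y. exp (inner t2 y))"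
    for t1 t2
  proof -
    define I1 where "I1 = (\<integral>x. exp (inner t1 x) \<partial>MS)"
    define I2 where "I2 = (\<integral>y. exp (inner t2 y) \<partial>MW)"
    define t where "t = (t1, t2)"
    have I1n: "I1 \<ge> 0" unfolding I1_def by (rule integral_nonneg_AE) simp
    have I2n: "I2 \<ge> 0" unfolding I2_def by (rule integral_nonneg_AE) simp
    have e1: "(\<integral>\<^sup>+ x. ennreal (exp (inner t1 x)) \<partial>MS) = ennreal I1"
      unfolding I1_def using i1 by (intro nn_integral_eq_integral) auto
    have e2: "(\<integral>\<^sup>+ y. ennreal (exp (inner t2 y)) \<partial>MW) = ennreal I2"
      unfolding I2_def using i2 by (intro nn_integral_eq_integral) auto
    have m1: "(\<lambda>x. exp (inner t1 x)) \<in> borel_measurable MS"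
      using i1 by auto
    have m2: "(\<lambda>y. exp (inner t2 y)) \<in> borel_measurable MW"
      using i2 by auto
    have mt: "(\<lambda>z. ennreal (exp (inner t z))) \<in> borel_measurable M"
      using idM by measurable
    have prodeq: "(\<integral>\<^sup>+ z. ennreal (exp (inner t z)) \<partial>M) = ennreal (I1 * I2)"
    proof -
      have "(\<integral>\<^sup>+ z. ennreal (exp (inner t z)) \<partial>M)
          = (\<integral>\<^sup>+ x. \<integral>\<^sup>+ y. ennreal (exp (inner t1 x)) * ennreal (exp (inner t2 y)) \<partial>MW \<partial>MS)"
        unfolding M_def
        using P.M2.nn_integral_fst[OF mt[unfolded M_def], symmetric]
        by (simp add: t_def exp_add ennreal_mult)
      also have "\<dots> = (\<integral>\<^sup>+ x. ennreal (exp (inner t1 x)) * ennreal I2 \<partial>MS)"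
        using m2 by (simp add: nn_integral_cmult e2)
      also have "\<dots> = ennreal I1 * ennreal I2"
        using m1 by (simp add: nn_integral_multc e1)
      finally show ?thesis using I1n I2n by (simp add: ennreal_mult)
    qed
    obtain C where C: "\<And>z. z \<in> K \<Longrightarrow> norm (exp (inner t z)) \<le> C" and C0: "C \<ge> 0"
    proof
      show "norm (exp (inner t z)) \<le> exp (norm t * B)" if "z \<in> K" for z
      proof -
        have "inner t z \<le> norm t * norm z" by (rule norm_cauchy_schwarz)
        also have "\<dots> \<le> norm t * B" using B[OF that] by (simp add: mult_left_mono)
        finally show ?thesis by simp
      qed
    qed simp
    have intE: "integrable M (\<lambda>z. indicator K z * exp (inner t z))"
    proof (rule finite_measure.integrable_const_bound[OF finM, where B=C])
      show "AE x in M. norm (indicator K x * exp (inner t x)) \<le> C"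
        using C C0 by (auto simp: indicator_def)
      show "(\<lambda>z. indicator K z * exp (inner t z)) \<in> borel_measurable M"
        using indK idM by measurable
    qed
    define c where "c = inner t m"
    have lowerE: "p * exp c \<le> (\<integral>z. indicator K z * exp (inner t z) \<partial>M)"
    proof -
      have pt: "indicator K z * (exp c * (1 - c) + exp c * inner t z) \<le> indicator K z * exp (inner t z)" for z
      proof -
        have "exp c * (1 + (inner t z - c)) \<le> exp c * exp (inner t z - c)"
          by (intro mult_left_mono exp_ge_add_one_self) auto
        also have "\<dots> = exp (inner t z)" by (simp add: exp_diff)
        finally show ?thesis by (auto simp: indicator_def algebra_simps)
      qed
      have "(\<integral>z. indicator K z * (exp c * (1 - c) + exp c * inner t z) \<partial>M)
          = exp c * (1 - c) * (\<integral>z. indicator K z \<partial>M) + exp c * (\<integral>z. indicator K z * inner t z \<partial>M)"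
      proof -
        have "(\<integral>z. indicator K z * (exp c * (1 - c) + exp c * inner t z) \<partial>M)
            = (\<integral>z. exp c * (1 - c) * indicator K z + exp c * (indicator K z * inner t z) \<partial>M)"
          by (simp add: algebra_simps)
        also have "\<dots> = (\<integral>z. exp c * (1 - c) * indicator K z \<partial>M) + (\<integral>z. exp c * (indicator K z * inner t z) \<partial>M)"
          by (rule Bochner_Integration.integral_add) (use intind intinner[of t] in auto)
        also have "\<dots> = exp c * (1 - c) * (\<integral>z. indicator K z \<partial>M) + exp c * (\<integral>z. indicator K z * inner t z \<partial>M)"
          by simp
        finally show ?thesis .
      qed
      also have "\<dots> = p * exp c"
        using intK inner_m[of t] by (simp add: c_def algebra_simps)
      finally have eq: "(\<integral>z. indicator K z * (exp c * (1 - c) + exp c * inner t z) \<partial>M) = p * exp c" .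
      have "(\<integral>z. indicator K z * (exp c * (1 - c) + exp c * inner t z) \<partial>M) \<le> (\<integral>z. indicator K z * exp (inner t z) \<partial>M)"
        using intind intinner[of t] intE pt
        by (intro integral_mono) (auto simp: algebra_simps)
      then show ?thesis using eq by simp
    qed
    have "ennreal (\<integral>z. indicator K z * exp (inner t z) \<partial>M)
        = (\<integral>\<^sup>+ z. ennreal (indicator K z * exp (inner t z)) \<partial>M)"
      using intE by (intro nn_integral_eq_integral[symmetric]) auto
    also have "\<dots> \<le> (\<integral>\<^sup>+ z. ennreal (exp (inner t z)) \<partial>M)"
      by (intro nn_integral_mono) (auto simp: indicator_def)
    finally have "ennreal (\<integral>z. indicator K z * exp (inner t z) \<partial>M) \<le> ennreal (I1 * I2)"
      using prodeq by simp
    then have "(\<integral>z. indicator K z * exp (inner t z) \<partial>M) \<le> I1 * I2"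
      using I1n I2n by (simp add: ennreal_le_iff)
    with lowerE have low: "p * exp c \<le> I1 * I2" by simp
    have pe: "p * exp c > 0" using p0 by simp
    then have "I1 * I2 > 0" using low by linarith
    then have I1p: "I1 > 0" and I2p: "I2 > 0" using I1n I2n
      by (auto simp: zero_less_mult_iff)
    have "ln p + c = ln (p * exp c)" using p0 by (simp add: ln_mult)
    also have "\<dots> \<le> ln (I1 * I2)" using low pe by simp
    also have "\<dots> = ln I1 + ln I2" using I1p I2p by (simp add: ln_mult)
    finally have "ln p + c \<le> ln I1 + ln I2" .
    then show ?thesis
      by (cases m) (simp add: log_mgf_def I1_def I2_def c_def t_def)
  qed
  define F1 where "F1 t1 = inner t1 (fst m) - log_mgf MS t1" for t1
  define F2 where "F2 t2 = inner t2 (snd m) - log_mgf MW t2" for t2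
  define T1 where "T1 = {t. integrable MS (\<lambda>x. exp (inner t x))}"
  define T2 where "T2 = {t. integrable MW (\<lambda>x. exp (inner t x))}"
  have c1: "log_mgf_conj MS (fst m) = (SUP t\<in>T1. ereal (F1 t))"
    by (simp add: log_mgf_conj_def F1_def T1_def)
  have c2: "log_mgf_conj MW (snd m) = (SUP t\<in>T2. ereal (F2 t))"
    by (simp add: log_mgf_conj_def F2_def T2_def)
  have keyF: "F1 a + F2 b \<le> - ln p" if "a \<in> T1" "b \<in> T2" for a b
    using key that by (simp add: F1_def F2_def T1_def T2_def)
  have z1: "(0::'a) \<in> T1" unfolding T1_def
    using P.M1.finite_measure_axioms by (simp add: finite_measure.integrable_const)
  have z2: "(0::'b) \<in> T2" unfolding T2_def
    using P.M2.finite_measure_axioms by (simp add: finite_measure.integrable_const)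
  have up1: "(SUP t\<in>T1. ereal (F1 t)) \<le> ereal (- ln p - F2 b)" if "b \<in> T2" for b
    using keyF[OF _ that] by (intro SUP_least) (simp, smt (verit))
  have lo1: "ereal (F1 0) \<le> (SUP t\<in>T1. ereal (F1 t))"
    using z1 by (rule SUP_upper)
  obtain a1 where a1: "(SUP t\<in>T1. ereal (F1 t)) = ereal a1"
    using up1[OF z2] lo1
    by (cases "(SUP t\<in>T1. ereal (F1 t))") auto
  have "(SUP t\<in>T2. ereal (F2 t)) \<le> ereal (- ln p - a1)"
  proof (rule SUP_least)
    fix b assume "b \<in> T2"
    then have "ereal a1 \<le> ereal (- ln p - F2 b)" using up1 a1 by metis
    then show "ereal (F2 b) \<le> ereal (- ln p - a1)" by simp
  qed
  then have "log_mgf_conj MS (fst m) + log_mgf_conj MW (snd m) \<le> ereal a1 + ereal (- ln p - a1)"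
    using c1 c2 a1 by (metis add_left_mono)
  then have "log_mgf_conj MS (fst m) + log_mgf_conj MW (snd m) \<le> ereal (- ln p)"
    by simp
  then show ?thesis using mK by (auto simp: p_def M_def)
qed
theorem theorem1:
  fixes f :: "real^'d \<Rightarrow> real" and g :: "real^'p \<Rightarrow> real"
    and D :: "real^'d^'p" and P :: "real^'p^'p" and q :: "real^'p"
    and R :: "((real^'d) \<times> (real^'p)) set"
  assumes f_meas: "f \<in> borel_measurable borel"
    and f_nonneg: "\<And>x. f x \<ge> 0"
    and f_int: "(\<integral>\<^sup>+ x. ennreal (f x) \<partial>lborel) = 1"
    and g_meas: "g \<in> borel_measurable borel"
    and g_nonneg: "\<And>w. g w \<ge> 0"
    and g_int: "(\<integral>\<^sup>+ w. ennreal (g w) \<partial>lborel) = 1"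
    and g_supp: "closure {w. g w > 0} = UNIV"
    and P_inv: "invertible P"
    and R_convex: "convex R" and R_compact: "compact R"
  shows "let MS = density lborel (\<lambda>x. ennreal (f x));
             MW = density lborel (\<lambda>w. ennreal (g w));
             pr = measure (MS \<Otimes>\<^sub>M MW)
                    {(s, w). (s, matrix_inv P *v (w - D *v s - q)) \<in> R}
         in pr = 0 \<or>
            ereal (ln pr) \<le>
              - (INF z \<in> R. log_mgf_conj MS (fst z)
                            + log_mgf_conj MW (D *v fst z + P *v snd z + q))"
proof -
  define MS where "MS = density lborel (\<lambda>x. ennreal (f x))"
  define MW where "MW = density lborel (\<lambda>w. ennreal (g w))"
  define Pi where "Pi = matrix_inv P"
  have PPi: "P ** Pi = mat 1" and PiP: "Pi ** P = mat 1"
    using someI_ex[OF P_inv[unfolded invertible_def]] by (auto simp: Pi_def matrix_inv_def)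
  have sS: "sets MS = sets borel" by (simp add: MS_def)
  have sW: "sets MW = sets borel" by (simp add: MW_def)
  have PS: "prob_space MS"
  proof
    show "emeasure MS (space MS) = 1"
      using f_int f_meas by (simp add: MS_def emeasure_density)
  qed
  have PW: "prob_space MW"
  proof
    show "emeasure MW (space MW) = 1"
      using g_int g_meas by (simp add: MW_def emeasure_density)
  qed
  define T where "T z = (fst z, D *v fst z + P *v snd z + q)" for z :: "(real^'d) \<times> (real^'p)"
  define K where "K = T ` R"
  have setEq: "{(s, w). (s, Pi *v (w - D *v s - q)) \<in> R} = K"
  proof (intro set_eqI iffI)
    fix x assume "x \<in> {(s, w). (s, Pi *v (w - D *v s - q)) \<in> R}"
    then obtain s w where x: "x = (s, w)" and r: "(s, Pi *v (w - D *v s - q)) \<in> R" by auto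
    have "T (s, Pi *v (w - D *v s - q)) = (s, w)"
      by (simp add: T_def matrix_vector_mul_assoc PPi)
    then show "x \<in> K" using r x unfolding K_def by (metis image_eqI)
  next
    fix x assume "x \<in> K"
    then obtain z where z: "z \<in> R" "x = T z" unfolding K_def by auto
    have "Pi *v (D *v fst z + P *v snd z + q - D *v fst z - q) = snd z"
      by (simp add: matrix_vector_mul_assoc PiP)
    then show "x \<in> {(s, w). (s, Pi *v (w - D *v s - q)) \<in> R}"
      using z by (simp add: T_def)
  qed
  have linT: "linear (\<lambda>z::(real^'d) \<times> (real^'p). (fst z, D *v fst z + P *v snd z))"
    by (intro linearI) (auto simp: matrix_vector_right_distrib matrix_vector_mult_scaleR algebra_simps)
  define L where "L = (\<lambda>z::(real^'d) \<times> (real^'p). (fst z, D *v fst z + P *v snd z))"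
  have Keq: "K = (+) (0, q) ` (L ` R)"
    unfolding K_def image_image by (intro image_cong refl) (auto simp: T_def L_def)
  have cK: "convex K" unfolding Keq
    by (intro convex_translation convex_linear_image R_convex) (use linT in \<open>simp add: L_def\<close>)
  have kK: "compact K" unfolding Keq
    by (intro compact_translation compact_continuous_image linear_continuous_on R_compact)
       (use linT linear_conv_bounded_linear in \<open>auto simp add: L_def\<close>)
  have main: "measure (MS \<Otimes>\<^sub>M MW) K = 0 \<or> ereal (ln (measure (MS \<Otimes>\<^sub>M MW) K)) \<le>
       - (INF z \<in> R. log_mgf_conj MS (fst z) + log_mgf_conj MW (D *v fst z + P *v snd z + q))"
  proof (cases "measure (MS \<Otimes>\<^sub>M MW) K = 0")
    case False
    then have pos: "measure (MS \<Otimes>\<^sub>M MW) K > 0" using measure_nonneg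
      by (metis less_eq_real_def)
    obtain m where mK: "m \<in> K" and bd: "log_mgf_conj MS (fst m) + log_mgf_conj MW (snd m)
              \<le> ereal (- ln (measure (MS \<Otimes>\<^sub>M MW) K))"
      using chernoff_convex[OF PS PW sS sW cK kK pos] by blast
    then obtain z where z: "z \<in> R" "m = T z" unfolding K_def by auto
    have "(INF z \<in> R. log_mgf_conj MS (fst z) + log_mgf_conj MW (D *v fst z + P *v snd z + q))
        \<le> log_mgf_conj MS (fst z) + log_mgf_conj MW (D *v fst z + P *v snd z + q)"
      using z(1) by (rule INF_lower)
    also have "\<dots> \<le> ereal (- ln (measure (MS \<Otimes>\<^sub>M MW) K))"
      using bd z(2) by (simp add: T_def)
    finally have "ereal (ln (measure (MS \<Otimes>\<^sub>M MW) K)) \<le>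
       - (INF z \<in> R. log_mgf_conj MS (fst z) + log_mgf_conj MW (D *v fst z + P *v snd z + q))"
      using ereal_minus_le_minus[of "ereal (- ln (measure (MS \<Otimes>\<^sub>M MW) K))"] by simp
    then show ?thesis by simp
  qed simp
  show ?thesis
    unfolding Let_def MS_def[symmetric] MW_def[symmetric] Pi_def[symmetric] setEq
    by (rule main)
qed

end
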